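(* Let $G$ be a connected bipartite graph with at least two vertices, $v\in V(G)$, and let $c_0$ be the mill-pond configuration $MP(v)$ ($c_0(v)=1$, $c_0(x)=0$ for $x\neq v$). Then the configurations of the diffusion process become periodic with period length $2$ after a pre-period of length $\epsilon(v)-1$.
   Context: Diffusion process: for a finite simple graph $G$ and a chip configuration $c_t:V(G)\to\mathbb{Z}$ (negative values allowed), the next configuration is defined simultaneously for every vertex $u$ by $c_{t+1}(u)=c_t(u)-|\{w\in N(u): c_t(u)>c_t(w)\}|+|\{w\in N(u): c_t(u)<c_t(w)\}|$. $\epsilon(v)=\max_{w\in V(G)}d(v,w)$ is the eccentricity of $v$. The period length is the least $p\geq1$ with $c_{t+p}=c_t$ for some $t$, and the pre-period length is the least such $t$ for that $p$. *)

theory Defs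
  imports Main
begin

definition simple_graph :: "'a set \<Rightarrow> ('a \<Rightarrow> 'a \<Rightarrow> bool) \<Rightarrow> bool" where
  "simple_graph V E \<longleftrightarrow> finite V \<and> (\<forall>u w. E u w \<longrightarrow> E w u) \<and> (\<forall>u. \<not> E u u)
     \<and> (\<forall>u w. E u w \<longrightarrow> u \<in> V \<and> w \<in> V)"

definition is_walk :: "'a set \<Rightarrow> ('a \<Rightarrow> 'a \<Rightarrow> bool) \<Rightarrow> 'a list \<Rightarrow> bool" where
  "is_walk V E xs \<longleftrightarrow> xs \<noteq> [] \<and> set xs \<subseteq> V \<and> (\<forall>i. Suc i < length xs \<longrightarrow> E (xs ! i) (xs ! Suc i))"

definition connected_graph :: "'a set \<Rightarrow> ('a \<Rightarrow> 'a \<Rightarrow> bool) \<Rightarrow> bool" where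
  "connected_graph V E \<longleftrightarrow> (\<forall>u\<in>V. \<forall>w\<in>V. \<exists>xs. is_walk V E xs \<and> hd xs = u \<and> last xs = w)"

definition bipartite_graph :: "'a set \<Rightarrow> ('a \<Rightarrow> 'a \<Rightarrow> bool) \<Rightarrow> bool" where
  "bipartite_graph V E \<longleftrightarrow> (\<exists>A \<subseteq> V. \<forall>u w. E u w \<longrightarrow> (u \<in> A \<longleftrightarrow> w \<notin> A))"

definition gdist :: "'a set \<Rightarrow> ('a \<Rightarrow> 'a \<Rightarrow> bool) \<Rightarrow> 'a \<Rightarrow> 'a \<Rightarrow> nat" where
  "gdist V E u w = (LEAST n. \<exists>xs. is_walk V E xs \<and> hd xs = u \<and> last xs = w \<and> length xs = Suc n)"

definition eccentricity :: "'a set \<Rightarrow> ('a \<Rightarrow> 'a \<Rightarrow> bool) \<Rightarrow> 'a \<Rightarrow> nat" where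
  "eccentricity V E v = Max (gdist V E v ` V)"

definition nbrs :: "'a set \<Rightarrow> ('a \<Rightarrow> 'a \<Rightarrow> bool) \<Rightarrow> 'a \<Rightarrow> 'a set" where
  "nbrs V E u = {w \<in> V. E u w}"

definition diffusion_step :: "'a set \<Rightarrow> ('a \<Rightarrow> 'a \<Rightarrow> bool) \<Rightarrow> ('a \<Rightarrow> int) \<Rightarrow> ('a \<Rightarrow> int)" where
  "diffusion_step V E c = (\<lambda>u. if u \<in> V then
      c u - int (card {w \<in> nbrs V E u. c u > c w}) + int (card {w \<in> nbrs V E u. c u < c w})
    else c u)"

definition diffusion :: "'a set \<Rightarrow> ('a \<Rightarrow> 'a \<Rightarrow> bool) \<Rightarrow> ('a \<Rightarrow> int) \<Rightarrow> nat \<Rightarrow> ('a \<Rightarrow> int)" where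
  "diffusion V E c0 t = (diffusion_step V E ^^ t) c0"

definition mill_pond :: "'a \<Rightarrow> 'a \<Rightarrow> int" where
  "mill_pond v = (\<lambda>x. if x = v then 1 else 0)"

definition period_length :: "(nat \<Rightarrow> 'b) \<Rightarrow> nat" where
  "period_length s = (LEAST p. p \<ge> 1 \<and> (\<exists>t. s (t + p) = s t))"

definition pre_period_length :: "(nat \<Rightarrow> 'b) \<Rightarrow> nat" where
  "pre_period_length s = (LEAST t. s (t + period_length s) = s t)"

end

theory Submission
  imports Defs
begin

locale dsetup =
  fixes V :: "'a set" and E :: "'a \<Rightarrow> 'a \<Rightarrow> bool" and v :: 'a and A :: "'a set"
  assumes sgr: "simple_graph V E" and conn: "connected_graph V E" and card2: "card V \<ge> 2"
    and vV: "v \<in> V" and bip: "\<forall>u w. E u w \<longrightarrow> (u \<in> A \<longleftrightarrow> w \<notin> A)"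
begin

lemma finV: "finite V" using sgr unfolding simple_graph_def by blast
lemma Esym: "E u w \<Longrightarrow> E w u" using sgr unfolding simple_graph_def by blast
lemma Eirr: "\<not> E u u" using sgr unfolding simple_graph_def by blast
lemma EV: "E u w \<Longrightarrow> u \<in> V \<and> w \<in> V" using sgr unfolding simple_graph_def by blast

definition d where "d x = gdist V E v x"
definition deg where "deg x = card (nbrs V E x)"

lemma nbrs_iff: "w \<in> nbrs V E x \<longleftrightarrow> E x w" using EV unfolding nbrs_def by blast
lemma fin_nbrs: "finite (nbrs V E x)" using finV unfolding nbrs_def by simp

lemma walk_snoc: assumes "is_walk V E xs" "E (last xs) w" shows "is_walk V E (xs @ [w])"
proof -
  have wV: "w \<in> V" using EV assms(2) by blast
  have ne: "xs \<noteq> []" using assms(1) is_walk_def by blast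
  { fix i assume i: "Suc i < length (xs @ [w])"
    have "E ((xs @ [w]) ! i) ((xs @ [w]) ! Suc i)"
    proof (cases "Suc i < length xs")
      case True then show ?thesis using assms(1) unfolding is_walk_def by (simp add: nth_append)
    next
      case False
      then have "i = length xs - 1" using i by simp
      then show ?thesis using assms(2) ne by (simp add: nth_append last_conv_nth)
    qed }
  then show ?thesis using assms(1) wV unfolding is_walk_def by auto
qed

lemma walk_butlast: assumes "is_walk V E xs" "length xs \<ge> 2" shows "is_walk V E (butlast xs)"
proof -
  have "butlast xs \<noteq> []" using assms(2) by (cases xs) auto
  moreover have "set (butlast xs) \<subseteq> V" using assms(1) unfolding is_walk_def by (meson in_set_butlastD subset_iff)
  moreover have "\<forall>i. Suc i < length (butlast xs) \<longrightarrow> E (butlast xs ! i) (butlast xs ! Suc i)"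
    using assms(1) unfolding is_walk_def by (simp add: nth_butlast)
  ultimately show ?thesis unfolding is_walk_def by blast
qed

lemma walk_Cons: assumes "is_walk V E (x # xs)" "xs \<noteq> []" shows "is_walk V E xs \<and> E x (hd xs)"
proof -
  have "Suc 0 < length (x#xs)" using assms(2) by simp
  then have "E ((x#xs) ! 0) ((x#xs) ! Suc 0)" using assms(1) unfolding is_walk_def by blast
  then have "E x (hd xs)" using assms(2) by (simp add: hd_conv_nth)
  moreover have "is_walk V E xs" using assms unfolding is_walk_def
    by auto
  ultimately show ?thesis by blast
qed

lemma walk_parity: "is_walk V E xs \<Longrightarrow> (hd xs \<in> A \<longleftrightarrow> last xs \<in> A) \<longleftrightarrow> odd (length xs)"
proof (induction xs)
  case Nil then show ?case by (simp add: is_walk_def)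
next
  case (Cons x xs)
  show ?case
  proof (cases "xs = []")
    case True then show ?thesis by simp
  next
    case False
    with walk_Cons Cons.prems have w: "is_walk V E xs" "E x (hd xs)" by blast+
    then have "x \<in> A \<longleftrightarrow> hd xs \<notin> A" using bip by blast
    then show ?thesis using Cons.IH[OF w(1)] False by auto
  qed
qed

lemma exists_walk: "x \<in> V \<Longrightarrow> \<exists>xs. is_walk V E xs \<and> hd xs = v \<and> last xs = x"
  using conn vV unfolding connected_graph_def by blast

lemma d_walk: assumes "x \<in> V" shows "\<exists>xs. is_walk V E xs \<and> hd xs = v \<and> last xs = x \<and> length xs = Suc (d x)"
proof -
  obtain xs where "is_walk V E xs" "hd xs = v" "last xs = x" using exists_walk assms by blast
  then have "\<exists>n xs. is_walk V E xs \<and> hd xs = v \<and> last xs = x \<and> length xs = Suc n"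
    by (metis is_walk_def length_greater_0_conv Suc_pred)
  from LeastI_ex[OF this] show ?thesis unfolding d_def gdist_def by blast
qed

lemma d_le: "is_walk V E xs \<Longrightarrow> hd xs = v \<Longrightarrow> last xs = x \<Longrightarrow> length xs = Suc n \<Longrightarrow> d x \<le> n"
  unfolding d_def gdist_def by (rule Least_le) blast

lemma d_v: "d v = 0"
proof -
  have "is_walk V E [v]" using vV unfolding is_walk_def by simp
  from d_le[OF this] show ?thesis by simp
qed

lemma d_0: assumes "x \<in> V" "d x = 0" shows "x = v"
proof -
  obtain xs where "is_walk V E xs" "hd xs = v" "last xs = x" "length xs = Suc 0"
    using d_walk assms by force
  then show ?thesis by (metis hd_conv_nth last_conv_nth list.size(3) nat.distinct(1) diff_Suc_1)
qed

lemma d_adj: assumes "E x w" shows "d w \<le> Suc (d x)"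
proof -
  have "x \<in> V" using EV assms by blast
  then obtain xs where xs: "is_walk V E xs" "hd xs = v" "last xs = x" "length xs = Suc (d x)"
    using d_walk by blast
  have "is_walk V E (xs @ [w])" using walk_snoc xs assms by simp
  moreover have "hd (xs @ [w]) = v" using xs by (simp add: is_walk_def)
  ultimately show ?thesis using d_le[of "xs @ [w]" w "Suc (d x)"] xs by simp
qed

lemma d_pred: assumes "x \<in> V" "d x = Suc k" shows "\<exists>w. E w x \<and> d w = k"
proof -
  obtain xs where xs: "is_walk V E xs" "hd xs = v" "last xs = x" "length xs = Suc (Suc k)"
    using d_walk assms by force
  let ?ys = "butlast xs"
  have ys: "is_walk V E ?ys" using walk_butlast xs by simp
  have hy: "hd ?ys = v" using xs by (cases xs rule: rev_cases) (auto simp: hd_append)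
  have ly: "length ?ys = Suc k" using xs by simp
  have yne: "?ys \<noteq> []" using ly by (metis Zero_not_Suc list.size(3))
  have "last ?ys = ?ys ! k" using yne ly by (simp add: last_conv_nth)
  also have "\<dots> = xs ! k" using ly by (simp add: nth_butlast)
  finally have "last ?ys = xs ! k" .
  moreover have "x = xs ! Suc k" using xs(3,4) by (metis last_conv_nth list.size(3) Zero_not_Suc diff_Suc_1)
  moreover have "E (xs ! k) (xs ! Suc k)" using xs unfolding is_walk_def by simp
  ultimately have E1: "E (last ?ys) x" by simp
  have "d (last ?ys) \<le> k" using d_le[OF ys hy refl ly] .
  moreover have "d x \<le> Suc (d (last ?ys))" using d_adj E1 .
  ultimately show ?thesis using E1 assms by auto
qed

lemma d_parity: assumes "x \<in> V" shows "(v \<in> A \<longleftrightarrow> x \<in> A) \<longleftrightarrow> even (d x)"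
proof -
  obtain xs where xs: "is_walk V E xs" "hd xs = v" "last xs = x" "length xs = Suc (d x)"
    using d_walk assms by blast
  show ?thesis using walk_parity[OF xs(1)] xs by simp
qed

lemma d_adj_neq: assumes "E x w" shows "d x \<noteq> d w"
proof
  assume h: "d x = d w"
  have xV: "x \<in> V" and wV: "w \<in> V" using EV assms by blast+
  have "x \<in> A \<longleftrightarrow> w \<notin> A" using bip assms by blast
  then show False using d_parity[OF xV] d_parity[OF wV] h by auto
qed

lemma deg_pos: assumes "x \<in> V" shows "deg x \<ge> 1"
proof -
  obtain y where y: "y \<in> V" "y \<noteq> x"
  proof -
    have "\<not> V \<subseteq> {x}" using card2 finV by (metis card.empty card_insert_disjoint empty_iff finite.intros(1) insert_absorb insert_subset le_antisym nat_le_linear not_less_eq_eq numeral_2_eq_2 subset_singletonD)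
    then show ?thesis using that by blast
  qed
  obtain xs where xs: "is_walk V E xs" "hd xs = x" "last xs = y" using conn assms y unfolding connected_graph_def by blast
  have "length xs \<noteq> 1" using xs y by (metis One_nat_def hd_conv_nth last_conv_nth is_walk_def diff_Suc_1 lessI less_numeral_extra(3))
  then have "Suc 0 < length xs" using xs(1) unfolding is_walk_def by (cases xs) auto
  then have "E x (xs ! 1)" using xs unfolding is_walk_def by (metis One_nat_def hd_conv_nth)
  then have "xs ! 1 \<in> nbrs V E x" using nbrs_iff by blast
  then show ?thesis unfolding deg_def using fin_nbrs by (metis One_nat_def Suc_leI card_gt_0_iff empty_iff)
qed


primrec a :: "nat \<Rightarrow> 'a \<Rightarrow> nat" where
  "a 0 x = (if x = v then 1 else 0)"
| "a (Suc t) x = (if x \<in> V then (if a t x > 0 then deg x - a t x else card {w \<in> nbrs V E x. a t w > 0}) else 0)"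

definition sg :: "'a \<Rightarrow> int" where "sg x = (if (x \<in> A) = (v \<in> A) then 1 else -1)"
definition s :: "nat \<Rightarrow> 'a \<Rightarrow> int" where "s t x = (-1)^t * sg x"

lemma s_adj: "E x w \<Longrightarrow> s t w = - s t x"
  using bip unfolding s_def sg_def by auto
lemma s_cases: "s t x = 1 \<or> s t x = -1"
  unfolding s_def sg_def by (cases "even t") auto
lemma s_Suc: "s (Suc t) x = - s t x" unfolding s_def by simp
lemma s_2: "s (t + 2) x = s t x" unfolding s_def by simp
lemma s_v: "s 0 v = 1" unfolding s_def sg_def by simp

abbreviation C where "C t \<equiv> diffusion V E (mill_pond v) t"
lemma C_Suc: "C (Suc t) = diffusion_step V E (C t)" by (simp add: diffusion_def)

lemma card_K: "card {w\<in>nbrs V E x. 0 < a t x + a t w} = (if a t x > 0 then deg x else card {w\<in>nbrs V E x. a t w > 0})"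
proof (cases "a t x > 0")
  case True
  then have "{w\<in>nbrs V E x. 0 < a t x + a t w} = nbrs V E x" by auto
  then show ?thesis using True unfolding deg_def by simp
next
  case False
  then show ?thesis by simp
qed

lemma N_le: "card {w\<in>nbrs V E x. a t w > 0} \<le> deg x"
  unfolding deg_def by (rule card_mono[OF fin_nbrs]) auto

lemma main_eq: "(\<forall>x. C t x = s t x * int (a t x)) \<and> (\<forall>x\<in>V. a t x \<le> deg x) \<and> (\<forall>x. x \<notin> V \<longrightarrow> a t x = 0)"
proof (induction t)
  case 0
  have "\<forall>x. C 0 x = s 0 x * int (a 0 x)"
    using s_v by (simp add: diffusion_def mill_pond_def)
  moreover have "\<forall>x\<in>V. a 0 x \<le> deg x" using deg_pos by simp
  moreover have "\<forall>x. x \<notin> V \<longrightarrow> a 0 x = 0" using vV by auto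
  ultimately show ?case by blast
next
  case (Suc t)
  have IH1: "\<And>x. C t x = s t x * int (a t x)" and IH2: "\<And>x. x \<in> V \<Longrightarrow> a t x \<le> deg x"
    and IH3: "\<And>x. x \<notin> V \<Longrightarrow> a t x = 0" using Suc by blast+
  have eq: "C (Suc t) x = s (Suc t) x * int (a (Suc t) x)" for x
  proof (cases "x \<in> V")
    case False
    then show ?thesis using IH1 IH3 by (simp add: C_Suc diffusion_step_def)
  next
    case True
    define K where "K = {w\<in>nbrs V E x. 0 < a t x + a t w}"
    have Cw: "\<And>w. w \<in> nbrs V E x \<Longrightarrow> C t w = - s t x * int (a t w)"
      using IH1 s_adj nbrs_iff by simp
    have step: "C (Suc t) x = C t x - int (card {w \<in> nbrs V E x. C t x > C t w}) + int (card {w \<in> nbrs V E x. C t x < C t w})"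
      using True by (simp add: C_Suc diffusion_step_def)
    have le: "a t x \<le> deg x" using IH2 True by blast
    have aS: "a (Suc t) x = (if a t x > 0 then deg x - a t x else card {w \<in> nbrs V E x. a t w > 0})"
      using True by simp
    show ?thesis
    proof (cases "s t x = 1")
      case True
      have Cw': "\<And>w. w \<in> nbrs V E x \<Longrightarrow> C t w = - int (a t w)" using Cw True by simp
      have Cx: "C t x = int (a t x)" using IH1[of x] True by simp
      have s1: "{w \<in> nbrs V E x. C t x > C t w} = K" using Cw' Cx unfolding K_def by fastforce
      have s2: "{w \<in> nbrs V E x. C t x < C t w} = {}" using Cw' Cx by fastforce
      have e0: "C (Suc t) x = C t x - int (card K)" using step unfolding s1 s2 by simp
      have e1: "C (Suc t) x = int (a t x) - int (card K)" using e0 True IH1[of x] by simp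
      have e2: "s (Suc t) x = -1" using s_Suc[of t x] True by simp
      show ?thesis using e1 e2 card_K[of x t] aS le
        unfolding K_def by (cases "a t x > 0") (auto simp: of_nat_diff)
    next
      case False
      then have m: "s t x = -1" using s_cases[of t x] by simp
      have Cw': "\<And>w. w \<in> nbrs V E x \<Longrightarrow> C t w = int (a t w)" using Cw m by simp
      have Cx: "C t x = - int (a t x)" using IH1[of x] m by simp
      have s1: "{w \<in> nbrs V E x. C t x > C t w} = {}" using Cw' Cx by fastforce
      have s2: "{w \<in> nbrs V E x. C t x < C t w} = K" using Cw' Cx unfolding K_def by fastforce
      have e0: "C (Suc t) x = C t x + int (card K)" using step unfolding s1 s2 by simp
      have e1: "C (Suc t) x = - int (a t x) + int (card K)" using e0 m IH1[of x] by simp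
      have e2: "s (Suc t) x = 1" using s_Suc[of t x] m by simp
      show ?thesis using e1 e2 card_K[of x t] aS le
        unfolding K_def by (cases "a t x > 0") (auto simp: of_nat_diff)
    qed
  qed
  have b1: "\<forall>x\<in>V. a (Suc t) x \<le> deg x"
  proof
    fix x assume "x \<in> V"
    show "a (Suc t) x \<le> deg x"
    proof (cases "a t x > 0")
      case True then show ?thesis using \<open>x \<in> V\<close> by simp
    next
      case False then show ?thesis using \<open>x \<in> V\<close> N_le[of x t] by simp
    qed
  qed
  have b2: "\<forall>x. x \<notin> V \<longrightarrow> a (Suc t) x = 0" by simp
  show ?case using eq b1 b2 by blast
qed

lemma C_eq: "C t x = s t x * int (a t x)" using main_eq by blast
lemma a_le: "x \<in> V \<Longrightarrow> a t x \<le> deg x" using main_eq by blast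
lemma a_out: "x \<notin> V \<Longrightarrow> a t x = 0" using main_eq by blast


lemma a_pos_step: "x \<in> V \<Longrightarrow> a t x > 0 \<Longrightarrow> a (Suc t) x = deg x - a t x" by simp
lemma a_zero_step: "x \<in> V \<Longrightarrow> a t x = 0 \<Longrightarrow> a (Suc t) x = card {w \<in> nbrs V E x. a t w > 0}" by simp

lemma N_pos: assumes "E x w" "a t w > 0" shows "card {w \<in> nbrs V E x. a t w > 0} > 0"
proof -
  have "w \<in> {w \<in> nbrs V E x. a t w > 0}" using assms nbrs_iff by blast
  moreover have "finite {w \<in> nbrs V E x. a t w > 0}" using fin_nbrs by simp
  ultimately show ?thesis using card_gt_0_iff by blast
qed

lemma N_full: assumes "card {w \<in> nbrs V E x. a t w > 0} = deg x" "E x w" shows "a t w > 0"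
proof -
  have "{w \<in> nbrs V E x. a t w > 0} = nbrs V E x"
    using card_subset_eq[OF fin_nbrs, of "{w \<in> nbrs V E x. a t w > 0}"] assms(1) unfolding deg_def by blast
  then show ?thesis using assms(2) nbrs_iff by blast
qed

lemma N_all: assumes "\<And>w. E x w \<Longrightarrow> a t w > 0" shows "card {w \<in> nbrs V E x. a t w > 0} = deg x"
proof -
  have "{w \<in> nbrs V E x. a t w > 0} = nbrs V E x" using assms nbrs_iff by blast
  then show ?thesis unfolding deg_def by simp
qed

lemma deg_nbr: assumes "x \<in> V" obtains w where "E x w"
proof -
  have "nbrs V E x \<noteq> {}" using deg_pos[OF assms] unfolding deg_def by auto
  then show ?thesis using that nbrs_iff by blast
qed

lemma inv_E: assumes "x \<in> V" "a t x = deg x" "E x w" shows "a t w < deg w"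
proof (cases t)
  case 0
  have "a 0 x \<ge> 1" using assms deg_pos 0 by simp
  then have "x = v" by (simp split: if_splits)
  then have "w \<noteq> v" using assms(3) Eirr by blast
  then show ?thesis using 0 deg_pos EV assms(3) by fastforce
next
  case (Suc t')
  have "a t' x = 0"
  proof (rule ccontr)
    assume "a t' x \<noteq> 0"
    then have "a (Suc t') x = deg x - a t' x" using assms(1) by simp
    moreover have "deg x \<ge> 1" using deg_pos assms(1) by blast
    ultimately show False using assms(2) Suc \<open>a t' x \<noteq> 0\<close> by simp
  qed
  then have "card {w \<in> nbrs V E x. a t' w > 0} = deg x" using assms(1,2) Suc by simp
  then have "a t' w > 0" using N_full assms(3) by blast
  moreover have "w \<in> V" using EV assms(3) by blast
  ultimately show ?thesis using Suc deg_pos[of w] by simp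
qed

lemma inv: "(\<forall>x\<in>V. t < d x \<longrightarrow> a t x = 0) \<and> (\<forall>x\<in>V. d x = t \<longrightarrow> a t x \<ge> 1)
  \<and> (\<forall>x\<in>V. d x \<le> t \<longrightarrow> a t x = 0 \<longrightarrow> (\<forall>w. E x w \<longrightarrow> a t w > 0))"
proof (induction t)
  case 0
  have i1: "\<forall>x\<in>V. 0 < d x \<longrightarrow> a 0 x = 0"
  proof (intro ballI impI)
    fix x assume "x \<in> V" "0 < d x"
    then have "x \<noteq> v" using d_v by auto
    then show "a 0 x = 0" by simp
  qed
  have i2: "\<forall>x\<in>V. d x = 0 \<longrightarrow> a 0 x \<ge> 1"
  proof (intro ballI impI)
    fix x assume "x \<in> V" "d x = 0"
    then have "x = v" using d_0 by blast
    then show "a 0 x \<ge> 1" by simp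
  qed
  have i3: "\<forall>x\<in>V. d x \<le> 0 \<longrightarrow> a 0 x = 0 \<longrightarrow> (\<forall>w. E x w \<longrightarrow> a 0 w > 0)"
  proof (intro ballI impI)
    fix x assume "x \<in> V" "d x \<le> 0" "a 0 x = 0"
    then have "x = v" using d_0 by blast
    then show "\<forall>w. E x w \<longrightarrow> a 0 w > 0" using \<open>a 0 x = 0\<close> by simp
  qed
  show ?case using i1 i2 i3 by blast
next
  case (Suc t)
  have IB: "\<And>x. x \<in> V \<Longrightarrow> t < d x \<Longrightarrow> a t x = 0"
    and IC: "\<And>x. x \<in> V \<Longrightarrow> d x = t \<Longrightarrow> a t x \<ge> 1"
    and ID: "\<And>x w. x \<in> V \<Longrightarrow> d x \<le> t \<Longrightarrow> a t x = 0 \<Longrightarrow> E x w \<Longrightarrow> a t w > 0"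
    using Suc by blast+
  have B: "a (Suc t) x = 0" if x: "x \<in> V" "Suc t < d x" for x
  proof -
    have ax: "a t x = 0" using IB[OF x(1)] x(2) by linarith
    have "\<forall>w\<in>nbrs V E x. \<not> a t w > 0"
    proof
      fix w assume w: "w \<in> nbrs V E x"
      then have Exw: "E x w" using nbrs_iff by blast
      then have Ewx: "E w x" by (rule Esym)
      then have "d x \<le> Suc (d w)" by (rule d_adj)
      then have "t < d w" using x(2) by linarith
      moreover have "w \<in> V" using EV[OF Exw] by blast
      ultimately show "\<not> a t w > 0" using IB by blast
    qed
    then have "{w \<in> nbrs V E x. a t w > 0} = {}" by blast
    then have "card {w \<in> nbrs V E x. a t w > 0} = 0" by (metis card.empty)
    then show ?thesis using a_zero_step[OF x(1) ax] by linarith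
  qed
  have Cc: "a (Suc t) x \<ge> 1" if x: "x \<in> V" "d x = Suc t" for x
  proof -
    have ax: "a t x = 0" using IB x by simp
    obtain w where w: "E w x" "d w = t" using d_pred x by blast
    have "a t w \<ge> 1" using IC w EV by blast
    then have "card {w \<in> nbrs V E x. a t w > 0} > 0" using N_pos[of x w t] Esym[OF w(1)] by simp
    then show ?thesis using ax x by simp
  qed
  have D: "a (Suc t) w > 0" if x: "x \<in> V" "d x \<le> Suc t" "a (Suc t) x = 0" "E x w" for x w
  proof (cases "a t x > 0")
    case True
    have "deg x - a t x = 0" using x True by simp
    then have axd: "a t x = deg x" using a_le[OF x(1), of t] by simp
    have wV: "w \<in> V" using EV x(4) by blast
    show ?thesis
    proof (cases "a t w > 0")
      case True
      then show ?thesis using inv_E[OF x(1) axd x(4)] wV by simp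
    next
      case False
      then have "card {u \<in> nbrs V E w. a t u > 0} > 0" using N_pos[of w x t] Esym x(4) \<open>a t x > 0\<close> by blast
      then show ?thesis using False wV by simp
    qed
  next
    case False
    then have N0: "card {w \<in> nbrs V E x. a t w > 0} = 0" using x by simp
    show ?thesis
    proof (cases "d x \<le> t")
      case True
      then have "a t w > 0" using ID x False by blast
      then show ?thesis using N_pos[of x w t] x(4) N0 by simp
    next
      case False
      then have "d x = Suc t" using x by simp
      then obtain u where u: "E u x" "d u = t" using d_pred x by blast
      have "a t u \<ge> 1" using IC u EV by blast
      then show ?thesis using N_pos[of x u t] Esym[OF u(1)] N0 by simp
    qed
  qed
  show ?case using B Cc D by blast
qed

lemma invB: "x \<in> V \<Longrightarrow> t < d x \<Longrightarrow> a t x = 0" using inv by blast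
lemma invC: "x \<in> V \<Longrightarrow> d x = t \<Longrightarrow> a t x \<ge> 1" using inv by blast
lemma invD: "x \<in> V \<Longrightarrow> d x \<le> t \<Longrightarrow> a t x = 0 \<Longrightarrow> E x w \<Longrightarrow> a t w > 0" using inv by blast

definition ecc where "ecc = eccentricity V E v"

lemma ecc_Max: "ecc = Max (d ` V)"
proof -
  have "d = gdist V E v" using d_def by (intro ext) simp
  then show ?thesis unfolding ecc_def eccentricity_def by simp
qed

lemma d_le_ecc: "x \<in> V \<Longrightarrow> d x \<le> ecc"
  unfolding ecc_Max using finV by simp

lemma ecc_att: "\<exists>x\<in>V. d x = ecc"
proof -
  have "V \<noteq> {}" using vV by blast
  then have "ecc \<in> d ` V" unfolding ecc_Max using finV by (intro Max_in) auto
  then show ?thesis by auto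
qed

lemma per: assumes "ecc \<le> Suc t" shows "a (Suc (Suc t)) x = a t x"
proof (cases "x \<in> V")
  case False then show ?thesis using a_out by simp
next
  case xV: True
  have dx: "d x \<le> Suc t" using d_le_ecc[OF xV] assms by linarith
  have dp: "deg x \<ge> 1" using deg_pos xV by simp
  have le: "a t x \<le> deg x" using a_le xV by simp
  show ?thesis
  proof (cases "a t x > 0")
    case True
    show ?thesis
    proof (cases "a t x < deg x")
      case True
      then show ?thesis using \<open>a t x > 0\<close> xV le by simp
    next
      case False
      then have ad: "a t x = deg x" using le by simp
      then have a1: "a (Suc t) x = 0" using xV True by simp
      have "\<And>w. E x w \<Longrightarrow> a (Suc t) w > 0" using invD[OF xV dx a1] by blast
      then have "card {w \<in> nbrs V E x. a (Suc t) w > 0} = deg x" using N_all by blast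
      then show ?thesis using a1 ad xV by simp
    qed
  next
    case False
    then have a0: "a t x = 0" by simp
    have allp: "\<And>w. E x w \<Longrightarrow> a t w > 0"
    proof -
      fix w assume w: "E x w"
      show "a t w > 0"
      proof (cases "d x \<le> t")
        case True show ?thesis using invD[OF xV True a0 w] by simp
      next
        case False
        then have dxe: "d x = Suc t" using dx by simp
        have wV: "w \<in> V" using EV w by blast
        have "d w \<le> Suc t" using d_le_ecc[OF wV] assms by simp
        moreover have "d w \<noteq> d x" using d_adj_neq[OF w] by auto
        ultimately have dw: "d w \<le> t" using dxe by simp
        show ?thesis
        proof (rule ccontr)
          assume "\<not> a t w > 0"
          then have "a t w = 0" by simp
          then have "a t x > 0" using invD[OF wV dw] Esym w by blast
          then show False using a0 by simp
        qed
      qed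
    qed
    then have "card {w \<in> nbrs V E x. a t w > 0} = deg x" using N_all by blast
    then have "a (Suc t) x = deg x" using a0 xV by simp
    then show ?thesis using a0 xV dp by simp
  qed
qed

lemma C_per: "ecc \<le> Suc t \<Longrightarrow> C (t + 2) = C t"
  using per C_eq s_2 by (intro ext) (simp add: numeral_2_eq_2)

lemma C_per_a: assumes "C (t + 2) = C t" shows "a (t + 2) x = a t x"
proof -
  have "s t x * int (a (t+2) x) = s t x * int (a t x)" using C_eq[of "t+2" x] C_eq[of t x] s_2[of t x] fun_cong[OF assms, of x] by simp
  moreover have "s t x \<noteq> 0" using s_cases[of t x] by auto
  ultimately show ?thesis by simp
qed

lemma C_prop: "C (t + 2) = C t \<Longrightarrow> C (t + k + 2) = C (t + k)"
proof (induction k)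
  case 0 then show ?case by simp
next
  case (Suc k)
  have "C (t + Suc k + 2) = diffusion_step V E (C (t + k + 2))" using C_Suc[of "t + k + 2"] by simp
  also have "\<dots> = diffusion_step V E (C (t + k))" using Suc by simp
  also have "\<dots> = C (t + Suc k)" using C_Suc[of "t + k"] by simp
  finally show ?case .
qed

lemma no_per1: "C (t + 1) \<noteq> C t"
proof
  assume h: "C (t + 1) = C t"
  have "s (Suc t) v * int (a (Suc t) v) = s t v * int (a t v)" using C_eq[of "Suc t" v] C_eq[of t v] h by simp
  then have "- s t v * int (a (Suc t) v) = s t v * int (a t v)" using s_Suc by simp
  moreover have "s t v = 1 \<or> s t v = -1" using s_cases by blast
  ultimately have z: "a t v = 0 \<and> a (Suc t) v = 0" by auto
  obtain w where w: "E v w" using deg_nbr vV by blast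
  have "a t w > 0" using invD[OF vV _ _ w] d_v z by simp
  then have "card {w \<in> nbrs V E v. a t w > 0} > 0" using N_pos w by blast
  moreover have "a (Suc t) v = card {w \<in> nbrs V E v. a t w > 0}" using a_zero_step vV z by blast
  ultimately show False using z by linarith
qed

lemma ecc_pos: "ecc \<ge> 1"
proof -
  obtain x where "x \<in> V" "x \<noteq> v"
  proof -
    have "\<not> V \<subseteq> {v}" using card2 finV by (metis card.empty card_insert_disjoint empty_iff finite.intros(1) insert_absorb insert_subset le_antisym nat_le_linear not_less_eq_eq numeral_2_eq_2 subset_singletonD)
    then show ?thesis using that by blast
  qed
  then have "d x \<noteq> 0" using d_0 by blast
  then show ?thesis using d_le_ecc \<open>x \<in> V\<close> by fastforce
qed

lemma no_per2: assumes "t + 1 < ecc" shows "C (t + 2) \<noteq> C t"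
proof
  assume h: "C (t + 2) = C t"
  define k where "k = ecc - 2 - t"
  have "C (t + k + 2) = C (t + k)" using C_prop h by blast
  moreover have "t + k + 2 = ecc" using assms k_def by simp
  moreover have e: "t + k = ecc - 2" using assms k_def by simp
  ultimately have h2: "C ((ecc - 2) + 2) = C (ecc - 2)" by (simp only: e)
  obtain x where x: "x \<in> V" "d x = ecc" using ecc_att by blast
  have "a ((ecc - 2) + 2) x = a (ecc - 2) x" using C_per_a h2 by blast
  moreover have "a ((ecc - 2) + 2) x \<ge> 1"
  proof -
    have e: "ecc - 2 + 2 = ecc" using assms by simp
    have "a ecc x \<ge> 1" using invC x by blast
    then show ?thesis by (simp only: e)
  qed
  moreover have "a (ecc - 2) x = 0" using invB[of x "ecc - 2"] x assms by linarith
  ultimately show False by linarith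
qed

lemma final: "period_length C = 2 \<and> pre_period_length C = ecc - 1"
proof -
  have p2: "C (ecc + 2) = C ecc" using C_per by simp
  have pl: "period_length C = 2" unfolding period_length_def
  proof (rule Least_equality)
    show "(2::nat) \<ge> 1 \<and> (\<exists>t. C (t + 2) = C t)" using p2 by auto
  next
    fix p assume "p \<ge> 1 \<and> (\<exists>t. C (t + p) = C t)"
    then obtain t where p1: "p \<ge> 1" and t: "C (t + p) = C t" by blast
    have "p \<noteq> 1" using no_per1 t by blast
    then show "2 \<le> p" using p1 by linarith
  qed
  have "pre_period_length C = ecc - 1" unfolding pre_period_length_def pl
  proof (rule Least_equality)
    have "ecc \<le> Suc (ecc - 1)" by simp
    then show "C (ecc - 1 + 2) = C (ecc - 1)" by (rule C_per)
  next
    fix t assume "C (t + 2) = C t"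
    show "ecc - 1 \<le> t"
    proof (rule ccontr)
      assume "\<not> ecc - 1 \<le> t"
      then have "t + 1 < ecc" by linarith
      then show False using no_per2 \<open>C (t + 2) = C t\<close> by blast
    qed
  qed
  then show ?thesis using pl by simp
qed

end

theorem corollary21:
  fixes V :: "'a set" and E :: "'a \<Rightarrow> 'a \<Rightarrow> bool" and v :: 'a
  assumes "simple_graph V E"
    and "connected_graph V E"
    and "bipartite_graph V E"
    and "card V \<ge> 2"
    and "v \<in> V"
  shows "period_length (diffusion V E (mill_pond v)) = 2
       \<and> pre_period_length (diffusion V E (mill_pond v)) = eccentricity V E v - 1"
proof -
  obtain A where A: "\<forall>u w. E u w \<longrightarrow> (u \<in> A \<longleftrightarrow> w \<notin> A)"
    using assms(3) unfolding bipartite_graph_def by blast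
  interpret dsetup V E v A using assms A by unfold_locales auto
  show ?thesis using final unfolding ecc_def .
qed

end
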